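(* Let $(p_n)_n\subset[0,1]$. Then $$\lim_{K\to\infty}\liminf_{n\to\infty}\mathbb P_{p_n}\big(\exists i\in\mathbb N:\ Y_i^{(p_n)}(\tau_n)>K\big)=1$$ holds if and only if $p_n n^{1/\ell}\to\infty$ as $n\to\infty$ for each $\ell\in\mathbb N$. If one of these two statements fails, then $\lim_{K\to\infty}\liminf_{n\to\infty}\mathbb P_{p_n}\big(\exists i\in\mathbb N:\ Y_i^{(p_n)}(\tau_n)>K\big)=0$.
   Context: Let $p\in[0,1]$. Let $Z=(Z(t))_{t\ge0}$ be a standard Yule process: a continuous-time pure birth process started from $Z(0)=1$ in which each individual gives birth at rate $1$. Each newborn child is, independently of everything else, a clone of its parent (same genetic type) with probability $p$, and a mutant carrying a new genetic type with probability $1-p$. The ancestor has type $1$ and the successive mutants receive types $2,3,\dots$ in order of birth. For $i\in\mathbb N$, $Y_i^{(p)}(t)$ is the number of individuals of type $i$ at time $t$. Let $\tau_n=\inf\{t\ge0:Z(t)=n\}$. $\mathbb P_{p}$ denotes the law of this system with clone probability $p$. *)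

theory Defs
  imports "HOL-Probability.Probability"
begin

text \<open>The state of the system at the successive birth times of the Yule process is
  encoded as the list of genetic types of the individuals, in order of birth.
  At each birth, since all individuals reproduce at rate 1, the parent is uniform
  among the current individuals; the child is a clone (type of the parent) with
  probability p, otherwise a mutant carrying the next new type (current max type + 1).\<close>

definition yule_step :: "real \<Rightarrow> nat list \<Rightarrow> nat list pmf" where
  "yule_step p xs =
     bind_pmf (pmf_of_set {..<length xs}) (\<lambda>i.
     bind_pmf (bernoulli_pmf p) (\<lambda>c.
       return_pmf (xs @ [if c then xs ! i else Max (set xs) + 1])))"

fun yule_chain :: "real \<Rightarrow> nat \<Rightarrow> nat list pmf" where
  "yule_chain p 0 = return_pmf [1]"
| "yule_chain p (Suc m) = bind_pmf (yule_chain p m) (yule_step p)"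

text \<open>Law of the type list at time tau_n (population size n, i.e. n - 1 births).\<close>
definition yule_at_tau :: "real \<Rightarrow> nat \<Rightarrow> nat list pmf" where
  "yule_at_tau p n = yule_chain p (n - 1)"

definition Ycount :: "nat list \<Rightarrow> nat \<Rightarrow> nat" where
  "Ycount xs i = count (mset xs) i"

definition big_family_prob :: "real \<Rightarrow> nat \<Rightarrow> real \<Rightarrow> real" where
  "big_family_prob p n K =
     measure_pmf.prob (yule_at_tau p n) {xs. \<exists>i. real (Ycount xs i) > K}"

end

theory Submission
  imports Defs
begin

lemma finite_set_step: "xs \<noteq> [] \<Longrightarrow> finite (set_pmf (yule_step p xs))"
proof -
  assume ne: "xs \<noteq> []"
  have "set_pmf (yule_step p xs) \<subseteq> (\<lambda>i. xs @ [xs ! i]) ` {..<length xs} \<union> {xs @ [Max (set xs) + 1]}"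
  proof -
    have "set_pmf (pmf_of_set {..<length xs}) = {..<length xs}" using ne by (intro set_pmf_of_set) auto
    then show ?thesis by (auto simp: yule_step_def split: if_splits)
  qed
  then show ?thesis by (rule finite_subset) auto
qed

lemma set_step: "xs \<noteq> [] \<Longrightarrow> ys \<in> set_pmf (yule_step p xs) \<Longrightarrow> \<exists>x. ys = xs @ [x]"
  by (auto simp: yule_step_def)

lemma E_step:
  fixes f :: "nat list \<Rightarrow> real"
  assumes ne: "xs \<noteq> []" and p: "0 \<le> p" "p \<le> 1"
  shows "measure_pmf.expectation (yule_step p xs) f =
    (\<Sum>i<length xs. p * f (xs @ [xs ! i]) + (1 - p) * f (xs @ [Max (set xs) + 1])) / real (length xs)"
proof -
  have "measure_pmf.expectation (yule_step p xs) f =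
     (\<Sum>i\<in>{..<length xs}. measure_pmf.expectation (bind_pmf (bernoulli_pmf p) (\<lambda>c.
       return_pmf (xs @ [if c then xs ! i else Max (set xs) + 1]))) f /\<^sub>R real (card {..<length xs}))"
    unfolding yule_step_def using ne
    by (intro pmf_expectation_bind_pmf_of_set) (auto intro!: finite_subset[of _ "UNIV :: bool set"])
  also have "\<dots> = (\<Sum>i<length xs. (p * f (xs @ [xs ! i]) + (1 - p) * f (xs @ [Max (set xs) + 1])) / real (length xs))"
  proof (intro sum.cong refl)
    fix i
    have "bind_pmf (bernoulli_pmf p) (\<lambda>c. return_pmf (xs @ [if c then xs ! i else Max (set xs) + 1]))
       = map_pmf (\<lambda>c. xs @ [if c then xs ! i else Max (set xs) + 1]) (bernoulli_pmf p)"
      by (simp add: map_pmf_def)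
    then show "measure_pmf.expectation (bind_pmf (bernoulli_pmf p) (\<lambda>c.
       return_pmf (xs @ [if c then xs ! i else Max (set xs) + 1]))) f /\<^sub>R real (card {..<length xs}) =
       (p * f (xs @ [xs ! i]) + (1 - p) * f (xs @ [Max (set xs) + 1])) / real (length xs)"
      using p by (simp add: divide_simps mult.commute)
  qed
  finally show ?thesis by (simp add: sum_divide_distrib)
qed

lemma E_bind:
  fixes f :: "'b \<Rightarrow> real"
  assumes "finite (set_pmf M)" "\<And>x. x \<in> set_pmf M \<Longrightarrow> finite (set_pmf (N x))"
  shows "measure_pmf.expectation (bind_pmf M N) f = measure_pmf.expectation M (\<lambda>x. measure_pmf.expectation (N x) f)"
proof -
  have "measure_pmf.expectation (bind_pmf M N) f = (\<Sum>a\<in>set_pmf M. pmf M a *\<^sub>R measure_pmf.expectation (N a) f)"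
    using assms by (intro pmf_expectation_bind) auto
  also have "\<dots> = measure_pmf.expectation M (\<lambda>x. measure_pmf.expectation (N x) f)"
    using assms by (subst integral_measure_pmf_real[of "set_pmf M"]) (auto simp: mult.commute)
  finally show ?thesis .
qed

lemma E_mono:
  fixes f g :: "'b \<Rightarrow> real"
  assumes "finite (set_pmf M)" "\<And>x. x \<in> set_pmf M \<Longrightarrow> f x \<le> g x"
  shows "measure_pmf.expectation M f \<le> measure_pmf.expectation M g"
  using assms by (intro integral_mono_AE) (auto simp: integrable_measure_pmf_finite AE_measure_pmf_iff)

lemma prob_le_E:
  fixes f :: "'b \<Rightarrow> real"
  assumes "finite (set_pmf M)" "\<And>x. x \<in> set_pmf M \<Longrightarrow> indicator A x \<le> f x"
  shows "measure_pmf.prob M A \<le> measure_pmf.expectation M f"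
proof -
  have "measure_pmf.prob M A = measure_pmf.expectation M (indicator A)" by simp
  also have "\<dots> \<le> measure_pmf.expectation M f" using assms by (intro E_mono) auto
  finally show ?thesis .
qed

fun yrun :: "real \<Rightarrow> nat \<Rightarrow> nat list \<Rightarrow> nat list pmf" where
  "yrun p 0 xs = return_pmf xs"
| "yrun p (Suc L) xs = bind_pmf (yrun p L xs) (yule_step p)"

lemma set_yrun: "ys \<in> set_pmf (yrun p L xs) \<Longrightarrow> xs \<noteq> [] \<Longrightarrow> \<exists>zs. ys = xs @ zs \<and> length zs = L"
proof (induction L arbitrary: ys)
  case 0 then show ?case by simp
next
  case (Suc L)
  then obtain zs where zs: "zs \<in> set_pmf (yrun p L xs)" "ys \<in> set_pmf (yule_step p zs)" by auto
  with Suc obtain us where "zs = xs @ us" "length us = L" by blast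
  moreover have "zs \<noteq> []" using \<open>zs = xs @ us\<close> Suc by auto
  then obtain x where "ys = zs @ [x]" using set_step zs(2) by blast
  ultimately show ?case by (intro exI[of _ "us @ [x]"]) auto
qed

lemma finite_yrun: "xs \<noteq> [] \<Longrightarrow> finite (set_pmf (yrun p L xs))"
proof (induction L)
  case 0 then show ?case by simp
next
  case (Suc L)
  have "\<And>zs. zs \<in> set_pmf (yrun p L xs) \<Longrightarrow> finite (set_pmf (yule_step p zs))"
    using set_yrun[of _ p L xs] Suc by (auto intro!: finite_set_step)
  then show ?case using Suc by auto
qed

lemma chain_yrun: "yule_chain p (T + L) = bind_pmf (yule_chain p T) (yrun p L)"
proof (induction L)
  case 0 then show ?case by (simp add: bind_return_pmf')
next
  case (Suc L) then show ?case by (simp add: bind_assoc_pmf)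
qed

lemma yrun_chain: "yule_chain p L = yrun p L [1]"
  by (induction L) auto

lemma set_chain: "ys \<in> set_pmf (yule_chain p L) \<Longrightarrow> length ys = Suc L"
  using set_yrun[of ys p L "[1]"] by (auto simp: yrun_chain)

lemma finite_chain: "finite (set_pmf (yule_chain p L))"
  using finite_yrun[of "[1]" p L] by (simp add: yrun_chain)

definition Ik :: "nat list \<Rightarrow> nat \<Rightarrow> nat" where
  "Ik xs k = card {i. i < length xs \<and> k \<le> count (mset xs) (xs ! i)}"

lemma Ik_le: "Ik xs k \<le> length xs"
  unfolding Ik_def by (rule order.trans[OF card_mono[of "{..<length xs}"]]) auto

lemma Ik_mono_app: "Ik xs k \<le> Ik (xs @ [x]) k"
  unfolding Ik_def by (intro card_mono) (auto simp: nth_append)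

lemma Ik_mono_k: "k \<le> k' \<Longrightarrow> Ik xs k' \<le> Ik xs k"
  unfolding Ik_def by (intro card_mono) auto

lemma Ik_inc:
  assumes "i < length xs" "count (mset xs) (xs ! i) = k"
  shows "Ik xs (Suc k) < Ik (xs @ [xs ! i]) (Suc k)"
proof -
  let ?A = "{i. i < length xs \<and> Suc k \<le> count (mset xs) (xs ! i)}"
  let ?B = "{j. j < length (xs @ [xs ! i]) \<and> Suc k \<le> count (mset (xs @ [xs ! i])) ((xs @ [xs ! i]) ! j)}"
  have "?A \<subset> ?B"
  proof
    show "?A \<subseteq> ?B" by (auto simp: nth_append)
    have "length xs \<in> ?B" using assms by auto
    moreover have "length xs \<notin> ?A" by auto
    ultimately show "?A \<noteq> ?B" by blast
  qed
  then show ?thesis unfolding Ik_def by (intro psubset_card_mono) auto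
qed

lemma Ik_split: "Ik xs k = Ik xs (Suc k) + card {i. i < length xs \<and> count (mset xs) (xs ! i) = k}"
proof -
  have "{i. i < length xs \<and> k \<le> count (mset xs) (xs ! i)} =
     {i. i < length xs \<and> Suc k \<le> count (mset xs) (xs ! i)} \<union> {i. i < length xs \<and> count (mset xs) (xs ! i) = k}"
    by auto
  then show ?thesis unfolding Ik_def by (simp add: card_Un_disjoint[symmetric] disjoint_iff)
qed

lemma Ik_1: "Ik xs 1 = length xs"
proof -
  have "{i. i < length xs \<and> 1 \<le> count (mset xs) (xs ! i)} = {..<length xs}"
    by (auto simp: Suc_le_eq)
  then show ?thesis unfolding Ik_def by simp
qed

lemma Ik_pos: "0 < Ik xs j \<Longrightarrow> \<exists>v. j \<le> count (mset xs) v"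
  unfolding Ik_def by (metis (no_types, lifting) card.empty empty_Collect_eq less_irrefl)

definition hpot :: "real \<Rightarrow> real" where
  "hpot c = (if 0 < c then 2 powr c else 0)"

lemma hpot_nonneg: "0 \<le> hpot c" by (simp add: hpot_def)

lemma hpot_mono: "c \<le> c' \<Longrightarrow> hpot c \<le> hpot c'"
  by (auto simp: hpot_def)

lemma hpot_dec: "hpot (c - 1) \<le> hpot c / 2"
proof (cases "0 < c - 1")
  case True
  then have "2 powr (c - 1) = 2 powr c / 2" by (simp add: powr_diff)
  then show ?thesis using True by (simp add: hpot_def)
qed (auto simp: hpot_def)

lemma hpot_le: "0 \<le> x \<Longrightarrow> hpot (b - x) \<le> 2 powr b"
  by (auto simp: hpot_def)

lemma hpot_ge1: "x < b \<Longrightarrow> 1 \<le> hpot (b - x)"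
  by (auto simp: hpot_def intro: ge_one_powr_ge_zero)

lemma step_pot:
  assumes ne: "xs \<noteq> []" and p: "0 \<le> p" "p \<le> 1" and len: "length xs \<le> n"
    and a: "a \<le> real (Ik xs k)" and b: "0 \<le> b" "b \<le> a"
  shows "measure_pmf.expectation (yule_step p xs) (\<lambda>ys. hpot (b - real (Ik ys (Suc k))))
     \<le> (1 - p * (a - b) / (2 * real n)) * hpot (b - real (Ik xs (Suc k)))"
proof -
  define I where "I = real (Ik xs (Suc k))"
  define f where "f = (\<lambda>ys. hpot (b - real (Ik ys (Suc k))))"
  define M where "M = xs @ [Max (set xs) + 1]"
  define G where "G = {i. i < length xs \<and> count (mset xs) (xs ! i) = k}"
  define H where "H = hpot (b - I)"
  have lpos: "0 < real (length xs)" using ne by simp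
  have E: "measure_pmf.expectation (yule_step p xs) f =
    (\<Sum>i<length xs. p * f (xs @ [xs ! i]) + (1 - p) * f M) / real (length xs)"
    unfolding M_def by (rule E_step[OF ne p])
  have fle: "f (xs @ [x]) \<le> H" for x
    unfolding f_def H_def I_def using Ik_mono_app[of xs "Suc k" x] by (intro hpot_mono) simp
  show ?thesis
  proof (cases "b \<le> I")
    case True
    have "f (xs @ [x]) = 0" for x
      unfolding f_def using Ik_mono_app[of xs "Suc k" x] True I_def by (simp add: hpot_def)
    then show ?thesis using E True by (simp add: f_def M_def hpot_def I_def[symmetric])
  next
    case False
    have fG: "f (xs @ [xs ! i]) \<le> H / 2" if "i \<in> G" for i
    proof -
      have "Ik xs (Suc k) < Ik (xs @ [xs ! i]) (Suc k)" using that Ik_inc unfolding G_def by blast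
      then have "b - real (Ik (xs @ [xs ! i]) (Suc k)) \<le> (b - I) - 1" unfolding I_def by linarith
      then have "f (xs @ [xs ! i]) \<le> hpot ((b - I) - 1)" unfolding f_def by (rule hpot_mono)
      also have "\<dots> \<le> H / 2" unfolding H_def by (rule hpot_dec)
      finally show ?thesis .
    qed
    have Gsub: "G \<subseteq> {..<length xs}" unfolding G_def by auto
    have "(\<Sum>i<length xs. p * f (xs @ [xs ! i]) + (1 - p) * f M)
        \<le> (\<Sum>i<length xs. p * (H - (if i \<in> G then H / 2 else 0)) + (1 - p) * H)"
    proof (intro sum_mono)
      fix i assume "i \<in> {..<length xs}"
      have "f (xs @ [xs ! i]) \<le> H - (if i \<in> G then H / 2 else 0)"
        using fG fle by (cases "i \<in> G") auto
      moreover have "f M \<le> H" unfolding M_def by (rule fle)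
      ultimately show "p * f (xs @ [xs ! i]) + (1 - p) * f M \<le> p * (H - (if i \<in> G then H / 2 else 0)) + (1 - p) * H"
        using p by (intro add_mono mult_left_mono) auto
    qed
    also have "\<dots> = real (length xs) * H - p * (H / 2) * (\<Sum>i<length xs. (if i \<in> G then 1 else 0))"
    proof -
      have "(\<Sum>i<length xs. p * (H - (if i \<in> G then H / 2 else 0)) + (1 - p) * H)
          = (\<Sum>i<length xs. H - p * (H / 2) * (if i \<in> G then 1 else 0))"
        by (intro sum.cong refl) (auto simp: algebra_simps)
      also have "\<dots> = real (length xs) * H - p * (H / 2) * (\<Sum>i<length xs. (if i \<in> G then 1 else 0))"
        by (simp add: sum_subtractf sum_distrib_left)
      finally show ?thesis .
    qed
    also have "(\<Sum>i<length xs. (if i \<in> G then 1 else 0) :: real) = real (card G)"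
    proof -
      have "(\<Sum>i<length xs. (if i \<in> G then 1 else 0) :: real) = (\<Sum>i\<in>{i \<in> {..<length xs}. i \<in> G}. 1)"
        by (subst sum.inter_filter) auto
      also have "{i \<in> {..<length xs}. i \<in> G} = G" using Gsub by auto
      finally show ?thesis by simp
    qed
    finally have S: "(\<Sum>i<length xs. p * f (xs @ [xs ! i]) + (1 - p) * f M)
        \<le> real (length xs) * H - p * (H / 2) * real (card G)" .
    have cG: "real (card G) = real (Ik xs k) - I"
      using Ik_split[of xs k] unfolding G_def I_def by simp
    have H0: "0 \<le> H" unfolding H_def by (rule hpot_nonneg)
    have ab: "(a - b) / n \<le> real (card G) / real (length xs)"
    proof -
      have "(a - b) / n \<le> (a - b) / real (length xs)"
      proof -
        have "0 < n" using len ne by (cases xs) auto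
        then have "0 < real n * real (length xs)" using lpos by simp
        then show ?thesis using b len lpos by (metis divide_left_mono diff_ge_0_iff_ge of_nat_le_iff)
      qed
      also have "\<dots> \<le> real (card G) / real (length xs)"
        using cG a False lpos by (intro divide_right_mono) auto
      finally show ?thesis .
    qed
    have "measure_pmf.expectation (yule_step p xs) f \<le> (real (length xs) * H - p * (H / 2) * real (card G)) / real (length xs)"
      using E S lpos by (simp add: divide_right_mono)
    also have "\<dots> = H * (1 - p * (real (card G) / real (length xs)) / 2)"
      using lpos by (simp add: field_simps)
    also have "\<dots> \<le> H * (1 - p * ((a - b) / n) / 2)"
    proof -
      have "p * ((a - b) / n) \<le> p * (real (card G) / real (length xs))"
        using p ab by (intro mult_left_mono) auto
      then have "1 - p * (real (card G) / real (length xs)) / 2 \<le> 1 - p * ((a - b) / n) / 2" by (smt (verit) divide_right_mono)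
      then show ?thesis using H0 by (rule mult_left_mono)
    qed
    also have "\<dots> = (1 - p * (a - b) / (2 * real n)) * H" by (simp add: field_simps)
    finally show ?thesis unfolding f_def H_def I_def .
  qed
qed

lemma Ik_mono_append: "Ik xs k \<le> Ik (xs @ zs) k"
  unfolding Ik_def by (intro card_mono) (auto simp: nth_append)

lemma set_yrun': "ys \<in> set_pmf (yrun p L xs) \<Longrightarrow> xs \<noteq> [] \<Longrightarrow>
   length ys = length xs + L \<and> ys \<noteq> [] \<and> (\<forall>k. Ik xs k \<le> Ik ys k)"
  using set_yrun[of ys p L xs] Ik_mono_append by auto

lemma run_pot:
  assumes ne: "xs \<noteq> []" and p: "0 \<le> p" "p \<le> 1"
    and a: "a \<le> real (Ik xs k)" and b: "0 \<le> b" "b \<le> a" and len: "length xs + L \<le> n + 1"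
  shows "measure_pmf.expectation (yrun p L xs) (\<lambda>ys. hpot (b - real (Ik ys (Suc k))))
     \<le> (1 - p * (a - b) / (2 * real n)) ^ L * hpot (b - real (Ik xs (Suc k)))"
  using len
proof (induction L)
  case 0 then show ?case by simp
next
  case (Suc L)
  define c where "c = 1 - p * (a - b) / (2 * real n)"
  define f where "f = (\<lambda>ys. hpot (b - real (Ik ys (Suc k))))"
  have lxn: "length xs \<le> n" using Suc by simp
  have npos: "0 < n" using lxn ne by (cases xs) auto
  have "a \<le> n" using a Ik_le[of xs k] lxn by linarith
  then have "p * (a - b) \<le> 1 * real n" using p b by (intro mult_mono) auto
  then have c0: "0 \<le> c" unfolding c_def using npos by (simp add: field_simps)
  have fin: "\<And>ys. ys \<in> set_pmf (yrun p L xs) \<Longrightarrow> finite (set_pmf (yule_step p ys))"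
    using set_yrun' ne by (blast intro: finite_set_step)
  have "measure_pmf.expectation (yrun p (Suc L) xs) f =
      measure_pmf.expectation (yrun p L xs) (\<lambda>ys. measure_pmf.expectation (yule_step p ys) f)"
    using finite_yrun[OF ne] fin by (simp add: E_bind)
  also have "\<dots> \<le> measure_pmf.expectation (yrun p L xs) (\<lambda>ys. c * f ys)"
  proof (intro E_mono finite_yrun[OF ne])
    fix ys assume ys: "ys \<in> set_pmf (yrun p L xs)"
    then have "length ys \<le> n" "ys \<noteq> []" "a \<le> real (Ik ys k)"
      using set_yrun'[OF ys ne] Suc.prems a by (auto intro: order.trans)
    then show "measure_pmf.expectation (yule_step p ys) f \<le> c * f ys"
      unfolding f_def c_def using p b by (intro step_pot) auto
  qed
  also have "\<dots> = c * measure_pmf.expectation (yrun p L xs) f" by simp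
  also have "\<dots> \<le> c * (c ^ L * f xs)"
    using Suc c0 unfolding f_def c_def by (intro mult_left_mono) auto
  finally show ?case unfolding f_def c_def by simp
qed

lemma run_prob:
  assumes ne: "xs \<noteq> []" and p: "0 \<le> p" "p \<le> 1"
    and a: "a \<le> real (Ik xs k)" and b: "0 \<le> b" "b \<le> a" and len: "length xs + L \<le> n + 1"
  shows "measure_pmf.prob (yrun p L xs) {ys. real (Ik ys (Suc k)) < b}
     \<le> (1 - p * (a - b) / (2 * real n)) ^ L * 2 powr b"
proof -
  have "measure_pmf.prob (yrun p L xs) {ys. real (Ik ys (Suc k)) < b}
       \<le> measure_pmf.expectation (yrun p L xs) (\<lambda>ys. hpot (b - real (Ik ys (Suc k))))"
    by (intro prob_le_E finite_yrun[OF ne]) (auto simp: indicator_def hpot_nonneg hpot_ge1)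
  also have "\<dots> \<le> (1 - p * (a - b) / (2 * real n)) ^ L * hpot (b - real (Ik xs (Suc k)))"
    by (rule run_pot[OF assms])
  also have "\<dots> \<le> (1 - p * (a - b) / (2 * real n)) ^ L * 2 powr b"
  proof (cases L)
    case 0 then show ?thesis by (simp add: hpot_le)
  next
    case (Suc L')
    then have lxn: "length xs \<le> n" using len by simp
    have npos: "0 < n" using lxn ne by (cases xs) auto
    have "a \<le> n" using a Ik_le[of xs k] lxn by linarith
    then have "p * (a - b) \<le> 1 * real n" using p b by (intro mult_mono) auto
    then have c0: "0 \<le> 1 - p * (a - b) / (2 * real n)" using npos by (simp add: field_simps)
    show ?thesis using c0 by (intro mult_left_mono hpot_le) auto
  qed
  finally show ?thesis .
qed

lemma chain_phase:
  fixes n T L :: nat and a b p :: real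
  assumes npos: "0 < n" and p: "0 \<le> p" "p \<le> 1" and b: "0 \<le> b" "b \<le> a" and len: "T + L \<le> n" and an: "a \<le> n"
  shows "measure_pmf.prob (yule_chain p (T + L)) {ys. real (Ik ys (Suc k)) < b}
     \<le> measure_pmf.prob (yule_chain p T) {ys. real (Ik ys k) < a} + (1 - p * (a - b) / (2 * real n)) ^ L * 2 powr b"
proof -
  define c where "c = (1 - p * (a - b) / (2 * real n)) ^ L * 2 powr b"
  define A where "A = {ys. real (Ik ys (Suc k)) < b}"
  have "p * (a - b) \<le> 1 * real n" using p b an by (intro mult_mono) auto
  then have "0 \<le> 1 - p * (a - b) / (2 * real n)" using npos by (simp add: field_simps)
  then have c0: "0 \<le> c" unfolding c_def by simp
  have ne: "xs \<noteq> []" if "xs \<in> set_pmf (yule_chain p T)" for xs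
    using set_chain[OF that] by auto
  have "measure_pmf.prob (yule_chain p (T + L)) A = measure_pmf.expectation (yule_chain p (T + L)) (indicator A)"
    by simp
  also have "\<dots> = measure_pmf.expectation (yule_chain p T) (\<lambda>xs. measure_pmf.expectation (yrun p L xs) (indicator A))"
    unfolding chain_yrun using ne by (intro E_bind finite_chain finite_yrun) auto
  also have "\<dots> \<le> measure_pmf.expectation (yule_chain p T) (\<lambda>xs. indicator {ys. real (Ik ys k) < a} xs + c)"
  proof (intro E_mono finite_chain)
    fix xs assume xs: "xs \<in> set_pmf (yule_chain p T)"
    show "measure_pmf.expectation (yrun p L xs) (indicator A) \<le> indicator {ys. real (Ik ys k) < a} xs + c"
    proof (cases "a \<le> real (Ik xs k)")
      case True
      have "measure_pmf.expectation (yrun p L xs) (indicator A) = measure_pmf.prob (yrun p L xs) A" by simp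
      also have "\<dots> \<le> c" unfolding A_def c_def
        using set_chain[OF xs] len ne[OF xs] by (intro run_prob p b True) auto
      finally show ?thesis by (simp add: indicator_def)
    next
      case False
      have "measure_pmf.expectation (yrun p L xs) (indicator A) = measure_pmf.prob (yrun p L xs) A" by simp
      also have "\<dots> \<le> 1" by simp
      finally show ?thesis using False c0 by (simp add: indicator_def add_increasing2)
    qed
  qed
  also have "\<dots> = measure_pmf.prob (yule_chain p T) {ys. real (Ik ys k) < a} + c"
    using finite_chain by (subst Bochner_Integration.integral_add) (auto simp: integrable_measure_pmf_finite)
  finally show ?thesis unfolding A_def c_def .
qed

lemma err_bound:
  fixes n L j :: nat and p r ak :: real
  assumes p: "0 \<le> p" "p \<le> 1" and j: "1 \<le> j" and r: "r = p / (32 * j)" and ak: "0 \<le> ak" "ak \<le> n"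
    and nL: "real n \<le> 4 * j * L" and npos: "0 < n"
  shows "(1 - p * (ak - ak * r) / (2 * real n)) ^ L * 2 powr (ak * r) \<le> exp (- (ak * r))"
proof -
  define x where "x = p * (ak - ak * r) / (2 * real n)"
  define b where "b = ak * r"
  have jpos: "0 < real j" using j by simp
  have r0: "0 \<le> r" using r p jpos by simp
  have "r * 2 \<le> r * (32 * real j)" using r0 j by (intro mult_left_mono) auto
  also have "\<dots> = p" using r jpos by simp
  finally have r2: "r \<le> 1 / 2" using p by simp
  note r0 = r0 r2
  have b0: "0 \<le> b" using r0 ak unfolding b_def by simp
  have akr0: "0 \<le> ak * r" using r0 ak by simp
  have akr1: "ak * r \<le> ak" using r0 ak by (simp add: mult_left_le)
  have "ak - ak * r \<le> n" using akr0 ak by simp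
  then have "p * (ak - ak * r) \<le> 1 * real n" using p akr1 by (intro mult_mono) auto
  then have x1: "x \<le> 1" unfolding x_def using npos by (simp add: field_simps)
  have x0: "0 \<le> x" unfolding x_def using p akr1 npos by (auto intro!: divide_nonneg_pos mult_nonneg_nonneg)
  have "(1 - x) ^ L \<le> exp (- x) ^ L"
    using x0 x1 by (intro power_mono) (auto simp: exp_ge_add_one_self[of "-x", simplified] )
  also have "\<dots> = exp (- (x * L))" by (simp add: exp_of_nat_mult[symmetric] mult.commute)
  also have "\<dots> \<le> exp (- (2 * b))"
  proof -
    have "ak * r \<le> ak * (1 / 2)" using r0 ak by (intro mult_left_mono) auto
    then have half: "ak / 2 \<le> ak - ak * r" by simp
    have "p * (ak / 2) / (2 * real n) \<le> x" unfolding x_def using p npos half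
      by (intro divide_right_mono mult_left_mono) auto
    moreover have "p * (ak / 2) / (2 * real n) = 8 * j * b / n"
      unfolding b_def r using j by (simp add: field_simps)
    ultimately have "8 * j * b / n * L \<le> x * L" by (intro mult_right_mono) auto
    moreover have "2 * b \<le> 8 * j * b / n * L"
    proof -
      have "2 * b * n \<le> 2 * b * (4 * j * L)" using nL b0 by (intro mult_left_mono) auto
      then show ?thesis using npos by (simp add: field_simps)
    qed
    ultimately show ?thesis by simp
  qed
  finally have 1: "(1 - x) ^ L \<le> exp (- (2 * b))" .
  have 2: "2 powr b \<le> exp b"
  proof -
    have "2 powr b = exp (b * ln 2)" by (simp add: powr_def)
    also have "\<dots> \<le> exp b" using b0 ln_2_less_1 by (simp add: mult_left_le)
    finally show ?thesis .
  qed
  have "(1 - x) ^ L * 2 powr b \<le> exp (- (2 * b)) * exp b"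
    using 1 2 x1 by (intro mult_mono) auto
  also have "\<dots> = exp (- b)" by (simp add: exp_add[symmetric])
  finally show ?thesis unfolding x_def b_def .
qed

lemma phases:
  fixes n L j T0 :: nat and p :: real
  assumes p: "0 \<le> p" "p \<le> 1" and j: "1 \<le> j" and npos: "0 < n"
    and nL: "real n \<le> 4 * j * L" and T0: "real n / 2 \<le> real T0 + 1"
  shows "T0 + k * L + 1 \<le> n \<Longrightarrow>
    measure_pmf.prob (yule_chain p (T0 + k * L)) {ys. real (Ik ys (Suc k)) < real n / 2 * (p / (32 * j)) ^ k}
      \<le> k * exp (- (real n / 2 * (p / (32 * j)) ^ k))"
proof (induction k)
  case 0
  have "{ys. real (Ik ys (Suc 0)) < real n / 2} \<inter> set_pmf (yule_chain p T0) = {}"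
    using set_chain[of _ p T0] T0 Ik_1 by (auto simp: One_nat_def)
  then have "measure_pmf.prob (yule_chain p T0) {ys. real (Ik ys (Suc 0)) < real n / 2} = 0"
    by (simp add: measure_pmf_zero_iff Int_commute)
  then show ?case by simp
next
  case (Suc k)
  define r where "r = p / (32 * j)"
  define ak where "ak = real n / 2 * r ^ k"
  have r0: "0 \<le> r" "r \<le> 1" using p j unfolding r_def by (auto simp: field_simps)
  have ak0: "0 \<le> ak" unfolding ak_def using r0 by simp
  have rk: "r ^ k \<le> 1" using r0 by (rule power_le_one)
  have "real n / 2 * r ^ k \<le> real n / 2 * 1" using rk by (intro mult_left_mono) auto
  then have akn: "ak \<le> n" unfolding ak_def by simp
  have ak1: "ak * r = real n / 2 * r ^ Suc k" unfolding ak_def by simp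
  have IH: "measure_pmf.prob (yule_chain p (T0 + k * L)) {ys. real (Ik ys (Suc k)) < ak} \<le> k * exp (- ak)"
    using Suc unfolding ak_def r_def by simp
  have "measure_pmf.prob (yule_chain p (T0 + k * L + L)) {ys. real (Ik ys (Suc (Suc k))) < ak * r}
     \<le> measure_pmf.prob (yule_chain p (T0 + k * L)) {ys. real (Ik ys (Suc k)) < ak}
        + (1 - p * (ak - ak * r) / (2 * real n)) ^ L * 2 powr (ak * r)"
  proof (rule chain_phase[OF npos p])
    show "0 \<le> ak * r" using r0 ak0 by simp
    show "ak * r \<le> ak" using r0 ak0 by (simp add: mult_left_le)
    show "T0 + k * L + L \<le> n" using Suc.prems by simp
    show "ak \<le> real n" by (rule akn)
  qed
  also have "\<dots> \<le> k * exp (- ak) + exp (- (ak * r))"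
    using IH err_bound[OF p j r_def ak0 akn nL npos] by simp
  also have "\<dots> \<le> k * exp (- (ak * r)) + exp (- (ak * r))"
    using ak0 r0 by (intro add_mono mult_left_mono) (auto simp: mult_left_le)
  finally show ?case using ak1 unfolding r_def by (simp add: algebra_simps)
qed

lemma part1_bound:
  fixes n j :: nat and p K :: real
  assumes p: "0 \<le> p" "p \<le> 1" and j: "2 \<le> j" and nj: "4 * j \<le> n" and jK: "K < real j"
    and a1: "1 \<le> real n / 2 * (p / (32 * j)) ^ (j - 1)"
  shows "1 - (j - 1) * exp (- (real n / 2 * (p / (32 * j)) ^ (j - 1))) \<le> big_family_prob p n K"
proof -
  define L where "L = n div (4 * j) + 1"
  define T0 where "T0 = n - 1 - (j - 1) * L"
  define a where "a = real n / 2 * (p / (32 * j)) ^ (j - 1)"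
  have npos: "0 < n" using nj j by simp
  have nL: "real n \<le> 4 * j * L"
  proof -
    have "n < 4 * j * L"
    proof -
      have "n = 4 * j * (n div (4 * j)) + n mod (4 * j)" by simp
      moreover have "n mod (4 * j) < 4 * j" using j by simp
      ultimately show ?thesis unfolding L_def add_mult_distrib2 mult_1_right by linarith
    qed
    then show ?thesis by (simp flip: of_nat_mult)
  qed
  have jL: "4 * j * ((j - 1) * L) \<le> 2 * j * n"
  proof -
    have "4 * j * (n div (4 * j)) \<le> n" by (rule times_div_less_eq_dividend)
    then have "4 * j * L \<le> n + 4 * j" unfolding L_def by (simp add: add_mult_distrib2)
    then have "(j - 1) * (4 * j * L) \<le> (j - 1) * (n + 4 * j)" by (rule mult_left_mono) simp
    also have "\<dots> = (j - 1) * n + (j - 1) * (4 * j)" by (simp add: add_mult_distrib2)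
    also have "\<dots> \<le> (j - 1) * n + j * n"
    proof -
      have "(j - 1) * (4 * j) \<le> j * (4 * j)" by simp
      also have "\<dots> \<le> j * n" using nj by simp
      finally show ?thesis by simp
    qed
    also have "\<dots> \<le> 2 * j * n" by (simp add: add_mult_distrib[symmetric]) 
    finally show ?thesis by (simp add: algebra_simps)
  qed
  then have "(2 * j) * ((j - 1) * L * 2) \<le> (2 * j) * n" by (simp add: algebra_simps)
  then have jL': "(j - 1) * L * 2 \<le> n" using j by (subst (asm) mult_le_cancel1) simp
  have Tn: "T0 + (j - 1) * L + 1 = n" unfolding T0_def using jL' npos by simp
  have T0: "real n / 2 \<le> real T0 + 1"
  proof -
    have "real (T0 + (j - 1) * L + 1) = real n" using Tn by (simp only:)
    then have "real T0 + 1 = real n - real ((j - 1) * L)" by (simp only: of_nat_add of_nat_1)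
    moreover have "real ((j - 1) * L) * 2 \<le> real n" using jL' by (simp flip: of_nat_mult)
    ultimately show ?thesis by simp
  qed
  have P: "measure_pmf.prob (yule_chain p (n - 1)) {ys. real (Ik ys j) < a} \<le> (j - 1) * exp (- a)"
  proof -
    have eq: "n - 1 = T0 + (j - 1) * L" using Tn by simp
    have j1: "Suc (j - 1) = j" using j by simp
    have "measure_pmf.prob (yule_chain p (T0 + (j - 1) * L)) {ys. real (Ik ys (Suc (j - 1))) < a}
       \<le> real (j - 1) * exp (- a)"
      unfolding a_def using phases[OF p _ npos nL T0, of "j - 1"] Tn j by simp
    then show ?thesis unfolding eq j1 by simp
  qed
  have sub: "UNIV - {xs. \<exists>i. K < real (Ycount xs i)} \<subseteq> {ys. real (Ik ys j) < a}"
  proof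
    fix ys assume "ys \<in> UNIV - {xs. \<exists>i. K < real (Ycount xs i)}"
    then have no: "\<And>i. real (Ycount ys i) \<le> K" by (auto simp: not_less)
    show "ys \<in> {ys. real (Ik ys j) < a}"
    proof (rule ccontr)
      assume "ys \<notin> {ys. real (Ik ys j) < a}"
      then have "0 < Ik ys j" using a1 unfolding a_def by auto
      then obtain v where "j \<le> count (mset ys) v" using Ik_pos by blast
      then have "K < real (Ycount ys v)" using jK unfolding Ycount_def by linarith
      then show False using no[of v] by simp
    qed
  qed
  have "1 - measure_pmf.prob (yule_chain p (n - 1)) {xs. \<exists>i. K < real (Ycount xs i)}
     = measure_pmf.prob (yule_chain p (n - 1)) (UNIV - {xs. \<exists>i. K < real (Ycount xs i)})"
    using measure_pmf.prob_compl[of "{xs. \<exists>i. K < real (Ycount xs i)}" "yule_chain p (n - 1)"] by simp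
  also have "\<dots> \<le> measure_pmf.prob (yule_chain p (n - 1)) {ys. real (Ik ys j) < a}"
    using sub by (intro measure_pmf.finite_measure_mono) auto
  finally show ?thesis using P unfolding big_family_prob_def yule_at_tau_def a_def by simp
qed

definition Sj :: "nat list \<Rightarrow> nat \<Rightarrow> real" where
  "Sj xs j = (\<Sum>v\<in>set xs. real (count (mset xs) v choose j))"

lemma sum_list_count_real:
  fixes f :: "'a \<Rightarrow> real"
  shows "(\<Sum>x\<leftarrow>xs. f x) = (\<Sum>v\<in>set xs. real (count (mset xs) v) * f v)"
proof (induction xs)
  case Nil then show ?case by simp
next
  case (Cons a xs)
  show ?case
  proof (cases "a \<in> set xs")
    case True
    have "(\<Sum>v\<in>set (a # xs). real (count (mset (a # xs)) v) * f v)
       = (\<Sum>v\<in>set xs. real (count (mset xs) v) * f v + (if v = a then f v else 0))"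
      using True by (intro sum.cong) (auto simp: insert_absorb algebra_simps)
    also have "\<dots> = (\<Sum>v\<in>set xs. real (count (mset xs) v) * f v) + f a"
      using True by (simp add: sum.distrib)
    finally show ?thesis using Cons by simp
  next
    case False
    have "(\<Sum>v\<in>set (a # xs). real (count (mset (a # xs)) v) * f v)
       = real (count (mset (a # xs)) a) * f a + (\<Sum>v\<in>set xs. real (count (mset (a # xs)) v) * f v)"
      using False by simp
    also have "(\<Sum>v\<in>set xs. real (count (mset (a # xs)) v) * f v) = (\<Sum>v\<in>set xs. real (count (mset xs) v) * f v)"
      using False by (intro sum.cong) auto
    also have "count (mset (a # xs)) a = 1" using False by (simp add: count_eq_zero_iff)
    finally show ?thesis using Cons by simp
  qed
qed

lemma Sj_nonneg: "0 \<le> Sj xs j" unfolding Sj_def by (intro sum_nonneg) auto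

lemma Sj_app:
  assumes "1 \<le> j"
  shows "Sj (xs @ [x]) j = Sj xs j + real (count (mset xs) x choose (j - 1))"
proof -
  obtain j' where j': "j = Suc j'" using assms by (cases j) auto
  show ?thesis
  proof (cases "x \<in> set xs")
    case True
    have "Sj (xs @ [x]) j = (\<Sum>v\<in>set xs. real (count (mset (xs @ [x])) v choose j))"
      unfolding Sj_def using True by (simp add: insert_absorb)
    also have "\<dots> = (\<Sum>v\<in>set xs. real (count (mset xs) v choose j) + (if v = x then real (count (mset xs) x choose (j - 1)) else 0))"
      by (intro sum.cong refl) (auto simp: j')
    also have "\<dots> = Sj xs j + real (count (mset xs) x choose (j - 1))"
      unfolding Sj_def using True by (simp add: sum.distrib)
    finally show ?thesis .
  next
    case False
    have cx: "count (mset xs) x = 0" using False by (simp add: count_eq_zero_iff)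
    have "Sj (xs @ [x]) j = real (count (mset (xs @ [x])) x choose j) + (\<Sum>v\<in>set xs. real (count (mset (xs @ [x])) v choose j))"
      unfolding Sj_def using False by simp
    also have "(\<Sum>v\<in>set xs. real (count (mset (xs @ [x])) v choose j)) = Sj xs j"
      unfolding Sj_def using False by (intro sum.cong refl) auto
    also have "count (mset (xs @ [x])) x = 1" using cx by simp
    also have "real (1 choose j) = real (count (mset xs) x choose (j - 1))"
      unfolding cx j' by (cases j') auto
    finally show ?thesis by simp
  qed
qed

lemma choose_ident: "real c * real (c choose j') = real (Suc j') * real (c choose Suc j') + real j' * real (c choose j')"
proof -
  have "(c - j') * (c choose j') = Suc j' * (c choose Suc j')"
    by (simp only: binomial_absorb_comp binomial_absorption)
  then have "real (c - j') * real (c choose j') = real (Suc j') * real (c choose Suc j')"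
    by (metis of_nat_mult)
  moreover have "real c * real (c choose j') = real (c - j') * real (c choose j') + real j' * real (c choose j')"
  proof (cases "j' \<le> c")
    case True then show ?thesis by (simp add: of_nat_diff algebra_simps)
  next
    case False then show ?thesis by simp
  qed
  ultimately show ?thesis by simp
qed

lemma Sj_idx:
  "(\<Sum>i<length xs. real (count (mset xs) (xs ! i) choose j')) = real (Suc j') * Sj xs (Suc j') + real j' * Sj xs j'"
proof -
  have "(\<Sum>i<length xs. real (count (mset xs) (xs ! i) choose j')) = sum_list (map (\<lambda>v. real (count (mset xs) v choose j')) xs)"
    by (simp add: sum_list_sum_nth atLeast0LessThan)
  also have "\<dots> = (\<Sum>v\<in>set xs. real (count (mset xs) v) * real (count (mset xs) v choose j'))"
    by (rule sum_list_count_real)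
  also have "\<dots> = (\<Sum>v\<in>set xs. real (Suc j') * real (count (mset xs) v choose Suc j') + real j' * real (count (mset xs) v choose j'))"
    by (intro sum.cong refl) (rule choose_ident)
  also have "\<dots> = real (Suc j') * Sj xs (Suc j') + real j' * Sj xs j'"
    unfolding Sj_def by (simp add: sum.distrib sum_distrib_left)
  finally show ?thesis .
qed

lemma Sj_1: "Sj xs 1 = real (length xs)"
proof -
  have "Sj xs 1 = (\<Sum>v\<in>set xs. real (count (mset xs) v) * 1)" unfolding Sj_def by simp
  also have "\<dots> = (\<Sum>x\<leftarrow>xs. (1::real))" by (rule sum_list_count_real[symmetric])
  finally show ?thesis by (simp add: sum_list_triv)
qed

lemma E_step_Sj:
  assumes ne: "xs \<noteq> []" and p: "0 \<le> p" "p \<le> 1"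
  shows "measure_pmf.expectation (yule_step p xs) (\<lambda>ys. Sj ys (Suc (Suc j'))) =
     Sj xs (Suc (Suc j')) + p / real (length xs) * (real (Suc (Suc j')) * Sj xs (Suc (Suc j')) + real (Suc j') * Sj xs (Suc j'))"
proof -
  let ?j = "Suc (Suc j')"
  have M: "count (mset xs) (Max (set xs) + 1) = 0"
  proof -
    have "Max (set xs) + 1 \<notin> set xs"
    proof
      assume "Max (set xs) + 1 \<in> set xs"
      then have "Max (set xs) + 1 \<le> Max (set xs)" by (intro Max_ge) auto
      then show False by simp
    qed
    then show ?thesis by (simp add: count_eq_zero_iff)
  qed
  have l: "0 < real (length xs)" using ne by simp
  have "measure_pmf.expectation (yule_step p xs) (\<lambda>ys. Sj ys ?j) =
    (\<Sum>i<length xs. p * Sj (xs @ [xs ! i]) ?j + (1 - p) * Sj (xs @ [Max (set xs) + 1]) ?j) / real (length xs)"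
    by (rule E_step[OF ne p])
  also have "\<dots> = (\<Sum>i<length xs. Sj xs ?j + p * real (count (mset xs) (xs ! i) choose Suc j')) / real (length xs)"
  proof (intro arg_cong[where f="\<lambda>x. x / _"] sum.cong refl)
    fix i
    have "Sj (xs @ [Max (set xs) + 1]) ?j = Sj xs ?j" using Sj_app[of ?j xs "Max (set xs) + 1", unfolded M] by simp
    moreover have "Sj (xs @ [xs ! i]) ?j = Sj xs ?j + real (count (mset xs) (xs ! i) choose Suc j')"
      using Sj_app[of ?j xs "xs ! i"] by simp
    ultimately show "p * Sj (xs @ [xs ! i]) ?j + (1 - p) * Sj (xs @ [Max (set xs) + 1]) ?j =
       Sj xs ?j + p * real (count (mset xs) (xs ! i) choose Suc j')" by (simp add: algebra_simps)
  qed
  also have "\<dots> = Sj xs ?j + p / real (length xs) * (\<Sum>i<length xs. real (count (mset xs) (xs ! i) choose Suc j'))"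
  proof -
    have "(\<Sum>i<length xs. Sj xs ?j + p * real (count (mset xs) (xs ! i) choose Suc j'))
       = real (length xs) * Sj xs ?j + p * (\<Sum>i<length xs. real (count (mset xs) (xs ! i) choose Suc j'))"
      by (simp add: sum.distrib sum_distrib_left)
    then show ?thesis using l by (simp add: divide_simps)
  qed
  also have "\<dots> = Sj xs (Suc (Suc j')) + p / real (length xs) * (real (Suc (Suc j')) * Sj xs (Suc (Suc j')) + real (Suc j') * Sj xs (Suc j'))"
    by (simp only: Sj_idx)
  finally show ?thesis .
qed

lemma aux_lin: "(s::real) + p / d * (a * s + b * t) = (1 + p * a / d) * s + (p * b / d) * t"
  by (simp add: divide_inverse algebra_simps)

lemma aux_lin2: "(d::real) \<noteq> 0 \<Longrightarrow> (1 + p * a / d) * (d * X) + (p * b / d) * (d * Y) = d * X + p * a * X + p * b * Y"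
  by (simp add: field_simps)

lemma ES_chain:
  assumes p: "0 \<le> p" "p \<le> 1" and pj: "p * real (Suc j') \<le> 1 / 2"
  shows "measure_pmf.expectation (yule_chain p m) (\<lambda>xs. Sj xs (Suc j')) \<le> real (Suc m) * ((2 * p) ^ j' * fact j')"
  using pj
proof (induction j' arbitrary: m)
  case 0
  have "measure_pmf.expectation (yule_chain p m) (\<lambda>xs. Sj xs (Suc 0)) \<le> measure_pmf.expectation (yule_chain p m) (\<lambda>xs. real (Suc m))"
  proof (intro E_mono finite_chain)
    fix xs assume "xs \<in> set_pmf (yule_chain p m)"
    then have "length xs = Suc m" by (rule set_chain)
    then show "Sj xs (Suc 0) \<le> real (Suc m)" using Sj_1[of xs] by simp
  qed
  then show ?case by simp
next
  case (Suc j')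
  define B where "B = (\<lambda>i. (2 * p) ^ i * fact i :: real)"
  have B0: "0 \<le> B i" for i unfolding B_def using p by simp
  have BS: "p * real (Suc j') * B j' = B (Suc j') / 2" unfolding B_def by (simp add: algebra_simps)
  have pj: "p * real (Suc (Suc j')) \<le> 1 / 2" by (rule Suc.prems)
  have IH: "measure_pmf.expectation (yule_chain p m) (\<lambda>xs. Sj xs (Suc j')) \<le> real (Suc m) * B j'" for m
  proof -
    have "p * real (Suc j') \<le> p * real (Suc (Suc j'))" using p by (intro mult_left_mono) auto
    then show ?thesis unfolding B_def using Suc.IH pj by simp
  qed
  show ?case
  proof (induction m)
    case 0
    have "Sj [1] (Suc (Suc j')) = 0" unfolding Sj_def by simp
    then show ?case using B0[of "Suc j'"] unfolding B_def by simp
  next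
    case (Suc m)
    let ?j = "Suc (Suc j')"
    have fin: "\<And>xs. xs \<in> set_pmf (yule_chain p m) \<Longrightarrow> finite (set_pmf (yule_step p xs))"
    proof -
      fix xs assume "xs \<in> set_pmf (yule_chain p m)"
      then have "length xs = Suc m" by (rule set_chain)
      then have "xs \<noteq> []" by auto
      then show "finite (set_pmf (yule_step p xs))" by (rule finite_set_step)
    qed
    have "measure_pmf.expectation (yule_chain p (Suc m)) (\<lambda>xs. Sj xs ?j)
       = measure_pmf.expectation (yule_chain p m) (\<lambda>xs. measure_pmf.expectation (yule_step p xs) (\<lambda>ys. Sj ys ?j))"
      using fin by (simp add: E_bind finite_chain)
    also have "\<dots> \<le> measure_pmf.expectation (yule_chain p m)
        (\<lambda>xs. (1 + p * real ?j / real (Suc m)) * Sj xs ?j + (p * real (Suc j') / real (Suc m)) * Sj xs (Suc j'))"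
    proof (intro E_mono finite_chain)
      fix xs assume xs: "xs \<in> set_pmf (yule_chain p m)"
      then have l: "length xs = Suc m" by (rule set_chain)
      then have ne: "xs \<noteq> []" by auto
      show "measure_pmf.expectation (yule_step p xs) (\<lambda>ys. Sj ys ?j) \<le>
          (1 + p * real ?j / real (Suc m)) * Sj xs ?j + (p * real (Suc j') / real (Suc m)) * Sj xs (Suc j')"
        unfolding E_step_Sj[OF ne p, of j'] l aux_lin by simp
    qed
    also have "\<dots> = (1 + p * real ?j / real (Suc m)) * measure_pmf.expectation (yule_chain p m) (\<lambda>xs. Sj xs ?j)
        + (p * real (Suc j') / real (Suc m)) * measure_pmf.expectation (yule_chain p m) (\<lambda>xs. Sj xs (Suc j'))"
      by (simp add: integrable_measure_pmf_finite[OF finite_chain])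
    also have "\<dots> \<le> (1 + p * real ?j / real (Suc m)) * (real (Suc m) * B (Suc j'))
        + (p * real (Suc j') / real (Suc m)) * (real (Suc m) * B j')"
    proof (rule add_mono)
      have c0: "0 \<le> 1 + p * real ?j / real (Suc m)" using p by simp
      have ih: "measure_pmf.expectation (yule_chain p m) (\<lambda>xs. Sj xs ?j) \<le> real (Suc m) * B (Suc j')"
        using Suc.IH unfolding B_def .
      from ih c0 show "(1 + p * real ?j / real (Suc m)) * measure_pmf.expectation (yule_chain p m) (\<lambda>xs. Sj xs ?j)
          \<le> (1 + p * real ?j / real (Suc m)) * (real (Suc m) * B (Suc j'))"
        by (rule mult_left_mono)
      have "0 \<le> p * real (Suc j') / real (Suc m)" using p by simp
      with IH[of m] show "p * real (Suc j') / real (Suc m) * measure_pmf.expectation (yule_chain p m) (\<lambda>xs. Sj xs (Suc j'))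
          \<le> p * real (Suc j') / real (Suc m) * (real (Suc m) * B j')"
        by (rule mult_left_mono)
    qed
    also have "\<dots> = real (Suc m) * B (Suc j') + p * real ?j * B (Suc j') + p * real (Suc j') * B j'"
      by (rule aux_lin2) simp
    also have "\<dots> \<le> real (Suc m) * B (Suc j') + 1 / 2 * B (Suc j') + B (Suc j') / 2"
      using pj B0[of "Suc j'"] unfolding BS by (intro add_mono mult_right_mono) auto
    also have "\<dots> = real (Suc (Suc m)) * B (Suc j')" by (simp add: algebra_simps)
    finally show ?case unfolding B_def .
  qed
qed

lemma part2_bound:
  fixes n J :: nat and p K :: real
  assumes p: "0 \<le> p" "p \<le> 1" and J: "1 \<le> J" and pJ: "p * real J \<le> 1 / 2" and K: "real J - 1 \<le> K" and n: "1 \<le> n"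
  shows "big_family_prob p n K \<le> real n * ((2 * p) ^ (J - 1) * fact (J - 1))"
proof -
  have JJ: "Suc (J - 1) = J" using J by simp
  have "big_family_prob p n K \<le> measure_pmf.expectation (yule_chain p (n - 1)) (\<lambda>xs. Sj xs J)"
    unfolding big_family_prob_def yule_at_tau_def
  proof (intro prob_le_E finite_chain)
    fix xs
    show "indicator {xs. \<exists>i. K < real (Ycount xs i)} xs \<le> Sj xs J"
    proof (cases "\<exists>i. K < real (Ycount xs i)")
      case True
      then obtain v where v: "K < real (count (mset xs) v)" unfolding Ycount_def by auto
      then have cv: "J \<le> count (mset xs) v" using K by linarith
      then have "0 < count (mset xs) v" using J by linarith
      then have vs: "v \<in> set xs" by (simp add: count_greater_zero_iff)
      have "1 \<le> real (count (mset xs) v choose J)"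
        using cv by (simp add: Suc_le_eq)
      also have "\<dots> \<le> Sj xs J" unfolding Sj_def using vs by (intro member_le_sum) auto
      finally show ?thesis using True by simp
    qed (simp add: Sj_nonneg)
  qed
  also have "\<dots> \<le> real (Suc (n - 1)) * ((2 * p) ^ (J - 1) * fact (J - 1))"
    using ES_chain[OF p, of "J - 1" "n - 1"] pJ JJ by simp
  finally show ?thesis using n by simp
qed

lemma powr_inv_pow: "0 < (x::real) \<Longrightarrow> 1 \<le> l \<Longrightarrow> (x powr (1 / real l)) ^ l = x"
proof -
  assume x: "0 < x" and l: "1 \<le> l"
  have "(x powr (1 / real l)) ^ l = (x powr (1 / real l)) powr (real l)"
    using x by (simp add: powr_realpow)
  also have "\<dots> = x powr (1 / real l * real l)" by (simp add: powr_powr)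
  also have "\<dots> = x" using l x by simp
  finally show ?thesis .
qed

lemma lim1:
  fixes p :: "nat \<Rightarrow> real" and K :: real
  assumes p0: "\<And>n. 0 \<le> p n" and p1: "\<And>n. p n \<le> 1"
    and B: "\<forall>l::nat. l \<ge> 1 \<longrightarrow> filterlim (\<lambda>n. p n * real n powr (1 / real l)) at_top sequentially"
  shows "((\<lambda>n. big_family_prob (p n) n K) \<longlongrightarrow> 1) sequentially"
proof -
  define J where "J = nat \<lfloor>K\<rfloor> + 2"
  define l where "l = J - 1"
  have J2: "2 \<le> J" unfolding J_def by simp
  have l1: "1 \<le> l" unfolding l_def using J2 by simp
  have JK: "K < real J"
  proof -
    have "K < real_of_int \<lfloor>K\<rfloor> + 1" by linarith
    also have "real_of_int \<lfloor>K\<rfloor> \<le> real (nat \<lfloor>K\<rfloor>)" by linarith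
    finally show ?thesis unfolding J_def by simp
  qed
  define f where "f = (\<lambda>n. p n * real n powr (1 / real l))"
  have f: "filterlim f at_top sequentially" using B l1 unfolding f_def by blast
  define c where "c = 1 / 2 * (1 / (32 * real J)) ^ l"
  have c0: "0 < c" unfolding c_def using J2 by simp
  define a where "a = (\<lambda>n. real n / 2 * (p n / (32 * real J)) ^ (J - 1))"
  have aeq: "\<forall>\<^sub>F n in sequentially. c * f n ^ l = a n"
    using eventually_gt_at_top[of 0]
  proof eventually_elim
    case (elim n)
    have "f n ^ l = p n ^ l * real n" unfolding f_def using elim l1
      by (simp add: power_mult_distrib powr_inv_pow)
    then show ?case unfolding a_def c_def l_def[symmetric]
      by (simp add: power_divide power_mult_distrib field_simps)
  qed
  have "filterlim (\<lambda>n. c * f n ^ l) at_top sequentially"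
    by (rule filterlim_tendsto_pos_mult_at_top[OF tendsto_const c0 filterlim_pow_at_top]) (use l1 f in auto)
  then have alim: "filterlim a at_top sequentially"
    unfolding filterlim_at_top
  proof (intro allI)
    fix Z
    assume "\<forall>Z. \<forall>\<^sub>F n in sequentially. Z \<le> c * f n ^ l"
    then have "\<forall>\<^sub>F n in sequentially. Z \<le> c * f n ^ l" by blast
    with aeq show "\<forall>\<^sub>F n in sequentially. Z \<le> a n" by eventually_elim simp
  qed
  have "filterlim (\<lambda>n. - a n) at_bot sequentially"
    using alim by (simp add: filterlim_uminus_at_bot)
  then have ex: "((\<lambda>n. exp (- a n)) \<longlongrightarrow> 0) sequentially"
    by (rule filterlim_compose[OF exp_at_bot])
  have low: "((\<lambda>n. 1 - real (J - 1) * exp (- a n)) \<longlongrightarrow> 1) sequentially"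
    using tendsto_diff[OF tendsto_const[of 1] tendsto_mult[OF tendsto_const[of "real (J - 1)"] ex]] by simp
  have ev: "\<forall>\<^sub>F n in sequentially. 1 - real (J - 1) * exp (- a n) \<le> big_family_prob (p n) n K"
    using eventually_ge_at_top[of "4 * J"] alim[unfolded filterlim_at_top, rule_format, of 1]
  proof eventually_elim
    case (elim n)
    have "1 \<le> real n / 2 * (p n / real (32 * J)) ^ (J - 1)" using elim(2) by (simp add: a_def)
    from part1_bound[OF p0 p1 J2 elim(1) JK this] show ?case unfolding a_def by simp
  qed
  have up: "\<forall>\<^sub>F n in sequentially. big_family_prob (p n) n K \<le> 1"
    by (simp add: big_family_prob_def)
  show ?thesis by (rule tendsto_sandwich[OF ev up low tendsto_const])
qed

lemma small_bound:
  fixes q Z y x :: real and n l :: nat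
  assumes q0: "0 \<le> q" and n1: "1 \<le> n" and l1: "1 \<le> l"
    and x: "x = real n powr (1 / real l)" and y: "y = real n powr (- (1 / real l))"
    and qx: "q * x < Z"
  shows "q \<le> Z * y" and "real n * q ^ Suc l \<le> Z ^ Suc l * y"
proof -
  have npos: "0 < real n" using n1 by simp
  have xy: "x * y = 1" unfolding x y using npos by (simp add: powr_add[symmetric])
  have x0: "0 < x" unfolding x using npos by simp
  have y0: "0 < y" unfolding y using npos by simp
  have Z0: "0 \<le> Z" using qx q0 x0 by (smt (verit) mult_nonneg_nonneg)
  have "q = q * x * y" using xy by (simp add: mult.assoc)
  also have "\<dots> \<le> Z * y" using qx y0 by (intro mult_right_mono) auto
  finally show qZ: "q \<le> Z * y" .
  have xl: "x ^ l = real n" unfolding x using npos l1 by (rule powr_inv_pow)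
  have "real n * q ^ Suc l = (q * x) ^ l * q" by (simp add: power_mult_distrib xl)
  also have "\<dots> \<le> Z ^ l * (Z * y)"
    using q0 x0 qx qZ Z0 by (intro mult_mono power_mono) auto
  also have "\<dots> = Z ^ Suc l * y" by simp
  finally show "real n * q ^ Suc l \<le> Z ^ Suc l * y" .
qed

lemma lim2:
  fixes p :: "nat \<Rightarrow> real"
  assumes p0: "\<And>n. 0 \<le> p n" and p1: "\<And>n. p n \<le> 1"
    and nB: "\<not> (\<forall>l::nat. l \<ge> 1 \<longrightarrow> filterlim (\<lambda>n. p n * real n powr (1 / real l)) at_top sequentially)"
  shows "\<exists>K0. \<forall>K\<ge>K0. Liminf sequentially (\<lambda>n. ereal (big_family_prob (p n) n K)) = 0"
proof -
  obtain l :: nat where l1: "1 \<le> l" and nf: "\<not> filterlim (\<lambda>n. p n * real n powr (1 / real l)) at_top sequentially"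
    using nB by blast
  then obtain Z where nZ: "\<not> (\<forall>\<^sub>F n in sequentially. Z \<le> p n * real n powr (1 / real l))"
    unfolding filterlim_at_top by blast
  define Z' where "Z' = max Z 1"
  have Z'1: "1 \<le> Z'" unfolding Z'_def by simp
  have freq: "\<exists>\<^sub>F n in sequentially. p n * real n powr (1 / real l) < Z'"
  proof -
    have "\<not> (\<forall>\<^sub>F n in sequentially. Z' \<le> p n * real n powr (1 / real l))"
    proof
      assume "\<forall>\<^sub>F n in sequentially. Z' \<le> p n * real n powr (1 / real l)"
      then have "\<forall>\<^sub>F n in sequentially. Z \<le> p n * real n powr (1 / real l)"
        by eventually_elim (auto simp: Z'_def)
      with nZ show False by blast
    qed
    moreover have "(\<lambda>n. \<not> p n * real n powr (1 / real l) < Z') = (\<lambda>n. Z' \<le> p n * real n powr (1 / real l))"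
      by (auto simp: not_less)
    ultimately show ?thesis unfolding frequently_def by simp
  qed
  define J where "J = l + 2"
  define C where "C = 2 ^ Suc l * fact (Suc l) * Z' ^ Suc l"
  have ylim: "((\<lambda>n. real n powr (- (1 / real l))) \<longlongrightarrow> 0) sequentially"
    using l1 by (intro tendsto_neg_powr filterlim_real_sequentially) auto
  show ?thesis
  proof (intro exI allI impI)
    fix K :: real assume K: "real l + 1 \<le> K"
    let ?P = "\<lambda>n. big_family_prob (p n) n K"
    have small: "\<exists>\<^sub>F n in sequentially. ?P n \<le> e" if e: "0 < e" for e
    proof -
      have t1: "((\<lambda>n. Z' * real J * real n powr (- (1 / real l))) \<longlongrightarrow> 0) sequentially"
        using tendsto_mult[OF tendsto_const ylim] by simp
      have t2: "((\<lambda>n. C * real n powr (- (1 / real l))) \<longlongrightarrow> 0) sequentially"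
        using tendsto_mult[OF tendsto_const ylim] by simp
      have half: "(0::real) < 1 / 2" by simp
      have ev: "\<forall>\<^sub>F n in sequentially. p n * real n powr (1 / real l) < Z' \<longrightarrow> ?P n \<le> e"
        using order_tendstoD(2)[OF t1 half] order_tendstoD(2)[OF t2 e] eventually_ge_at_top[of 1]
      proof eventually_elim
        case (elim n)
        show ?case
        proof
          assume qx: "p n * real n powr (1 / real l) < Z'"
          define y where "y = real n powr (- (1 / real l))"
          have sb: "p n \<le> Z' * y" "real n * p n ^ Suc l \<le> Z' ^ Suc l * y"
            using small_bound[OF p0 elim(3) l1 refl y_def qx] by auto
          have "p n * real J \<le> Z' * y * real J" using sb(1) by (intro mult_right_mono) auto
          also have "\<dots> \<le> 1 / 2" using elim(1) unfolding y_def by (simp add: mult_ac)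
          finally have pJ: "p n * real J \<le> 1 / 2" .
          have "?P n \<le> real n * ((2 * p n) ^ (J - 1) * fact (J - 1))"
            using K elim(3) pJ by (intro part2_bound p0 p1) (auto simp: J_def)
          also have "\<dots> = 2 ^ Suc l * fact (Suc l) * (real n * p n ^ Suc l)"
            by (simp add: J_def power_mult_distrib)
          also have "\<dots> \<le> 2 ^ Suc l * fact (Suc l) * (Z' ^ Suc l * y)"
            using sb(2) by (intro mult_left_mono) auto
          also have "\<dots> = C * y" unfolding C_def by simp
          also have "\<dots> \<le> e" using elim(2) unfolding y_def by simp
          finally show "?P n \<le> e" .
        qed
      qed
      from frequently_mp[OF ev freq] show ?thesis .
    qed
    have lo: "0 \<le> Liminf sequentially (\<lambda>n. ereal (?P n))"
      by (intro Liminf_bounded) (simp add: big_family_prob_def)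
    have hi: "Liminf sequentially (\<lambda>n. ereal (?P n)) \<le> 0"
    proof (rule ereal_le_epsilon2)
      fix e :: real assume e: "0 < e"
      show "Liminf sequentially (\<lambda>n. ereal (?P n)) \<le> 0 + ereal e"
      proof (rule ccontr)
        assume "\<not> ?thesis"
        then have "ereal e < Liminf sequentially (\<lambda>n. ereal (?P n))" by simp
        then have "\<forall>\<^sub>F n in sequentially. ereal e < ereal (?P n)"
          using le_Liminf_iff[of "Liminf sequentially (\<lambda>n. ereal (?P n))" sequentially "\<lambda>n. ereal (?P n)"] by auto
        then have "\<forall>\<^sub>F n in sequentially. \<not> ?P n \<le> e" by eventually_elim simp
        with small[OF e] show False by (simp add: frequently_def)
      qed
    qed
    from lo hi show "Liminf sequentially (\<lambda>n. ereal (?P n)) = 0" by simp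
  qed
qed

theorem corollary4p3:
  fixes p :: "nat \<Rightarrow> real"
  assumes "\<And>n. 0 \<le> p n" and "\<And>n. p n \<le> 1"
  shows "(((\<lambda>K. Liminf sequentially (\<lambda>n. ereal (big_family_prob (p n) n K))) \<longlongrightarrow> 1) at_top
            \<longleftrightarrow> (\<forall>l::nat. l \<ge> 1 \<longrightarrow>
                   filterlim (\<lambda>n. p n * real n powr (1 / real l)) at_top sequentially))
       \<and> ((\<not> ((\<lambda>K. Liminf sequentially (\<lambda>n. ereal (big_family_prob (p n) n K))) \<longlongrightarrow> 1) at_top
            \<or> \<not> (\<forall>l::nat. l \<ge> 1 \<longrightarrow>
                   filterlim (\<lambda>n. p n * real n powr (1 / real l)) at_top sequentially))
          \<longrightarrow> ((\<lambda>K. Liminf sequentially (\<lambda>n. ereal (big_family_prob (p n) n K))) \<longlongrightarrow> 0) at_top)"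
proof -
  define F where "F = (\<lambda>K. Liminf sequentially (\<lambda>n. ereal (big_family_prob (p n) n K)))"
  define B where "B = (\<forall>l::nat. l \<ge> 1 \<longrightarrow> filterlim (\<lambda>n. p n * real n powr (1 / real l)) at_top sequentially)"
  have BA: "(F \<longlongrightarrow> 1) at_top" if "B"
  proof -
    have "F K = 1" for K
    proof -
      have "((\<lambda>n. ereal (big_family_prob (p n) n K)) \<longlongrightarrow> ereal 1) sequentially"
        using lim1[OF assms that[unfolded B_def]] by (rule tendsto_ereal)
      then show ?thesis unfolding F_def by (simp add: lim_imp_Liminf one_ereal_def)
    qed
    then have "F = (\<lambda>_. 1)" by auto
    then show ?thesis by simp
  qed
  have nBC: "(F \<longlongrightarrow> 0) at_top" if nb: "\<not> B"
  proof -
    obtain K0 where K0: "\<forall>K\<ge>K0. F K = 0" using lim2[OF assms nb[unfolded B_def]] unfolding F_def by blast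
    have "\<forall>\<^sub>F K in at_top. F K = 0" using K0 by (auto simp: eventually_at_top_linorder)
    then show ?thesis by (rule tendsto_eventually)
  qed
  have uniq: False if "(F \<longlongrightarrow> 1) at_top" "(F \<longlongrightarrow> 0) at_top"
  proof -
    have "(1::ereal) = 0" using tendsto_unique[OF _ that] by simp
    then show False by simp
  qed
  have "(F \<longlongrightarrow> 1) at_top \<longleftrightarrow> B" using BA nBC uniq by blast
  moreover have "(\<not> (F \<longlongrightarrow> 1) at_top \<or> \<not> B) \<longrightarrow> (F \<longlongrightarrow> 0) at_top" using BA nBC by blast
  ultimately show ?thesis unfolding F_def B_def by blast
qed

end
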